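(* Let $m\ge1$, $f_1,\ldots,f_{m+1}$ arithmetic functions, and $\gamma_0,\gamma_1,\ldots,\gamma_m\in\mathbb{N}$ with $\gamma_0\mid\gamma_1\mid\cdots\mid\gamma_m$. Define $(a_{\gamma_0}S)(n_1,\ldots,n_{m+1}):=a_{\gamma_0}(n_1)\,S^{(\gamma_1,\ldots,\gamma_m)}_{f_1,\ldots,f_{m+1}}(n_1,\ldots,n_{m+1})$. Then for all $\boldsymbol s=(s_1,\ldots,s_{m+1})\in\mathbb{C}^{m+1}$ with $\Re(s_j)>1$ for $2\le j\le m+1$ and $\Re(s_1+\cdots+s_j)>\sigma(f_j)$ for $1\le j\le m+1$, \[ L(\boldsymbol s;a_{\gamma_0}S)=\prod_{j=2}^{m+1}\zeta(s_j)\cdot\prod_{j=1}^{m+1}L\bigl(s_1+\cdots+s_j;f_j^{[\gamma_{j-1}]}\bigr). \] In particular, for $\gamma_0=1$, \[ L\bigl(\boldsymbol s;S^{(\gamma_1,\ldots,\gamma_m)}_{f_1,\ldots,f_{m+1}}\bigr)=\prod_{j=2}^{m+1}\zeta(s_j)\cdot L(s_1;f_1)\prod_{j=2}^{m+1}L\bigl(s_1+\cdots+s_j;f_j^{[\gamma_{j-1}]}\bigr). \]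
   Context: An arithmetic function is a map $f:\mathbb{N}\to\mathbb{C}$, with $f(x)=0$ for $x\notin\mathbb{N}$. For $\gamma\in\mathbb{N}$, $a_\gamma(n)=1$ if $n=d^\gamma$ for some $d\in\mathbb{N}$ and $0$ otherwise; $f^{[\gamma]}:=a_\gamma f$ (pointwise product). $L(s;f)=\sum_{n\ge1}f(n)n^{-s}$, $\sigma(f)$ its abscissa of absolute convergence, $\zeta$ the Riemann zeta function. For $F:\mathbb{N}^k\to\mathbb{C}$, $L(\boldsymbol s;F):=\sum_{n_1,\ldots,n_k\ge1}F(n_1,\ldots,n_k)n_1^{-s_1}\cdots n_k^{-s_k}$. The multiple Ramanujan sum is \[ S^{(\gamma_1,\ldots,\gamma_m)}_{f_1,\ldots,f_{m+1}}(n_1,\ldots,n_{m+1}):=\sum_{\substack{(d_1,\ldots,d_m)\in\mathbb{N}^m\\ d_j^{\gamma_j}\mid\gcd(n_1,\ldots,n_{j+1})\ (1\le j\le m)}} f_1\Bigl(\frac{n_1}{d_1^{\gamma_1}}\Bigr)f_2\Bigl(\frac{d_1^{\gamma_1}}{d_2^{\gamma_2}}\Bigr)\cdots f_m\Bigl(\frac{d_{m-1}^{\gamma_{m-1}}}{d_m^{\gamma_m}}\Bigr)f_{m+1}\bigl(d_m^{\gamma_m}\bigr). \] *)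

theory Defs
  imports "HOL-Analysis.Analysis"
begin

text \<open>Arithmetic functions are maps nat => complex; only values at n >= 1 matter.
  The value of f at a rational a/b (b >= 1) is f(a div b) if b divides a and 0 otherwise.\<close>

definition fq :: "(nat \<Rightarrow> complex) \<Rightarrow> nat \<Rightarrow> nat \<Rightarrow> complex" where
  "fq f a b = (if b \<ge> 1 \<and> b dvd a then f (a div b) else 0)"

definition a_pow :: "nat \<Rightarrow> nat \<Rightarrow> complex" where
  "a_pow \<gamma> n = (if \<exists>d::nat. d \<ge> 1 \<and> n = d ^ \<gamma> then 1 else 0)"

definition restr_pow :: "nat \<Rightarrow> (nat \<Rightarrow> complex) \<Rightarrow> nat \<Rightarrow> complex" where
  "restr_pow \<gamma> f n = a_pow \<gamma> n * f n"

definition L :: "complex \<Rightarrow> (nat \<Rightarrow> complex) \<Rightarrow> complex" where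
  "L s f = (\<Sum>\<^sub>\<infinity>n\<in>{1..}. f n / of_nat n powr s)"

definition zeta :: "complex \<Rightarrow> complex" where
  "zeta s = (\<Sum>\<^sub>\<infinity>n\<in>{1..}. 1 / of_nat n powr s)"

definition sigma_abs :: "(nat \<Rightarrow> complex) \<Rightarrow> ereal" where
  "sigma_abs f = Inf {ereal x | x. summable (\<lambda>n. norm (f (Suc n)) / real (Suc n) powr x)}"

definition tuples :: "nat \<Rightarrow> (nat \<Rightarrow> nat) set" where
  "tuples k = {n. (\<forall>i\<in>{1..k}. n i \<ge> 1) \<and> (\<forall>i. i \<notin> {1..k} \<longrightarrow> n i = 0)}"

definition L_multi :: "nat \<Rightarrow> (nat \<Rightarrow> complex) \<Rightarrow> ((nat \<Rightarrow> nat) \<Rightarrow> complex) \<Rightarrow> complex" where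
  "L_multi k s F = (\<Sum>\<^sub>\<infinity>n\<in>tuples k. F n / (\<Prod>i\<in>{1..k}. of_nat (n i) powr s i))"

text \<open>Multiple Ramanujan sum S^{(gamma_1..gamma_m)}_{f_1..f_{m+1}}(n_1..n_{m+1}),
  with f j = f_j, \<gamma> j = gamma_j (indices 1..m used), n j = n_j.\<close>
definition ram_sum :: "nat \<Rightarrow> (nat \<Rightarrow> nat) \<Rightarrow> (nat \<Rightarrow> nat \<Rightarrow> complex) \<Rightarrow> (nat \<Rightarrow> nat) \<Rightarrow> complex" where
  "ram_sum m \<gamma> f n =
     (\<Sum>d\<in>{d. (\<forall>j\<in>{1..m}. d j \<ge> 1 \<and> d j ^ \<gamma> j dvd Gcd (n ` {1..j+1}))
              \<and> (\<forall>j. j \<notin> {1..m} \<longrightarrow> d j = 0)}.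
        fq (f 1) (n 1) (d 1 ^ \<gamma> 1)
        * (\<Prod>j\<in>{2..m}. fq (f j) (d (j - 1) ^ \<gamma> (j - 1)) (d j ^ \<gamma> j))
        * f (m + 1) (d m ^ \<gamma> m))"

end

theory Submission
  imports Defs
begin


lemma norm_abs_summable_prod_pair:
  fixes F :: "'a \<Rightarrow> complex" and G :: "'b \<Rightarrow> complex"
  assumes "(\<lambda>x. norm (F x)) summable_on P" "(\<lambda>y. norm (G y)) summable_on Q"
  shows "(\<lambda>(x,y). norm (F x * G y)) summable_on (P \<times> Q)"
proof -
  have "(\<lambda>z. norm (case z of (x,y) \<Rightarrow> F x * G y)) summable_on Sigma P (\<lambda>_. Q)"
  proof (rule iffD2[OF Infinite_Sum.abs_summable_on_Sigma_iff], intro conjI ballI)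
    fix x assume "x \<in> P"
    show "(\<lambda>y. norm (case (x,y) of (x,y) \<Rightarrow> F x * G y)) summable_on Q"
      using summable_on_cmult_right[OF assms(2), of "norm (F x)"] by (simp add: norm_mult)
  next
    have "(\<lambda>x. norm (F x) * infsum (\<lambda>y. norm (G y)) Q) summable_on P"
      using summable_on_cmult_left[OF assms(1)] by simp
    moreover have "infsum (\<lambda>y. norm (case (x,y) of (x,y) \<Rightarrow> F x * G y)) Q = norm (F x) * infsum (\<lambda>y. norm (G y)) Q" for x
      by (simp add: norm_mult infsum_cmult_right')
    ultimately show "(\<lambda>x. norm (infsum (\<lambda>y. norm (case (x,y) of (x,y) \<Rightarrow> F x * G y)) Q)) summable_on P"
      by (simp add: infsum_nonneg abs_mult)
  qed
  then show ?thesis by (simp add: case_prod_unfold)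
qed

lemma abs_summable_prod_PiE:
  fixes f :: "'a \<Rightarrow> 'b \<Rightarrow> complex"
  assumes "finite A" "\<And>x. x \<in> A \<Longrightarrow> (\<lambda>y. norm (f x y)) summable_on B x"
  shows "(\<lambda>g. norm (\<Prod>x\<in>A. f x (g x))) summable_on PiE A B"
  using assms
proof (induction A rule: finite_induct)
  case empty
  then show ?case by simp
next
  case (insert x A)
  have IH: "(\<lambda>g. norm (\<Prod>x\<in>A. f x (g x))) summable_on PiE A B" using insert by auto
  have fx: "(\<lambda>y. norm (f x y)) summable_on B x" using insert by auto
  have pi: "Pi\<^sub>E (insert x A) B = (\<lambda>(g,y). g(x:=y)) ` (Pi\<^sub>E A B \<times> B x)"
    unfolding PiE_insert_eq 
    by (subst swap_product [symmetric]) (simp add: image_image case_prod_unfold)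
  have inj: "inj_on (\<lambda>(g, y). g(x := y)) (Pi\<^sub>E A B \<times> B x)"
    using \<open>x \<notin> A\<close> by (rule inj_combinator')
  have eq: "((\<lambda>g. norm (\<Prod>x\<in>insert x A. f x (g x))) \<circ> (\<lambda>(g,y). g(x:=y))) =
             (\<lambda>(p, y). norm ((\<Prod>x'\<in>A. f x' (p x')) * f x y))"
  proof -
    have "(\<Prod>z\<in>A. f z ((g(x := y)) z)) = (\<Prod>z\<in>A. f z (g z))" for g y
      using insert.hyps by (intro prod.cong) auto
    then show ?thesis using insert.hyps by (auto simp: fun_eq_iff mult.commute)
  qed
  have "(\<lambda>(p, y). norm ((\<Prod>x'\<in>A. f x' (p x')) * f x y)) summable_on (Pi\<^sub>E A B \<times> B x)"
    by (rule norm_abs_summable_prod_pair[OF IH fx])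
  then show ?case
    by (simp only: pi summable_on_reindex[OF inj] eq)
qed

lemma cpow_nat_mult: "(of_nat (a*b)::complex) powr s = of_nat a powr s * of_nat b powr s"
  by (simp add: powr_times_real)

lemma cpow_nat_prod: "finite A \<Longrightarrow> (of_nat (\<Prod>i\<in>A. x i)::complex) powr s = (\<Prod>i\<in>A. of_nat (x i) powr s)"
proof (induction A rule: finite_induct)
  case empty
  then show ?case by (simp add: powr_def)
next
  case (insert a F)
  then show ?case by (simp only: prod.insert[OF insert(1,2)] cpow_nat_mult)
qed

lemma cpow_sum: "finite J \<Longrightarrow> (x::complex) \<noteq> 0 \<Longrightarrow> (\<Prod>j\<in>J. x powr s j) = x powr (\<Sum>j\<in>J. s j)"
  by (induction J rule: finite_induct) (auto simp: powr_add)

lemma one_cpow: "(1::complex) powr s = 1"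
  by (simp add: powr_def)

lemma telescope_cpow:
  fixes N :: nat and t :: "nat \<Rightarrow> nat" and s :: "nat \<Rightarrow> complex"
  assumes "\<And>i. t i \<ge> (1::nat)"
  shows "(\<Prod>j=1..N. (of_nat (\<Prod>i=j..N. t i)::complex) powr s j) = (\<Prod>i=1..N. of_nat (t i) powr (\<Sum>l=1..i. s l))"
proof (induction N)
  case 0
  then show ?case by simp
next
  case (Suc N)
  have tn: "(of_nat (t (Suc N))::complex) \<noteq> 0" using assms[of "Suc N"] by simp
  have "(\<Prod>j=1..Suc N. (of_nat (\<Prod>i=j..Suc N. t i)::complex) powr s j)
      = (\<Prod>j=1..Suc N. (of_nat (\<Prod>i=j..N. t i)::complex) powr s j * of_nat (t (Suc N)) powr s j)"
  proof (rule prod.cong[OF refl])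
    fix j assume "j \<in> {1..Suc N}"
    then have "(\<Prod>i=j..Suc N. t i) = (\<Prod>i=j..N. t i) * t (Suc N)"
      by (simp add: prod.nat_ivl_Suc')
    then show "(of_nat (\<Prod>i=j..Suc N. t i)::complex) powr s j = of_nat (\<Prod>i=j..N. t i) powr s j * of_nat (t (Suc N)) powr s j"
      by (simp only: cpow_nat_mult)
  qed
  also have "\<dots> = (\<Prod>j=1..Suc N. (of_nat (\<Prod>i=j..N. t i)::complex) powr s j) * (\<Prod>j=1..Suc N. of_nat (t (Suc N)) powr s j)"
    by (simp add: prod.distrib)
  also have "(\<Prod>j=1..Suc N. (of_nat (\<Prod>i=j..N. t i)::complex) powr s j) = (\<Prod>j=1..N. (of_nat (\<Prod>i=j..N. t i)::complex) powr s j)"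
    by (simp add: prod.nat_ivl_Suc' one_cpow)
  also have "(\<Prod>j=1..Suc N. (of_nat (t (Suc N))::complex) powr s j) = of_nat (t (Suc N)) powr (\<Sum>l=1..Suc N. s l)"
    using tn by (simp add: cpow_sum powr_add)
  finally show ?case using Suc.IH by (simp add: prod.nat_ivl_Suc')
qed

lemma norm_cpow_nat: "norm ((of_nat n::complex) powr s) = real n powr Re s"
  using norm_powr_real_powr[of "of_nat n" s] by simp

lemma zeta_summable:
  assumes "Re s > 1"
  shows "(\<lambda>k. 1 / (of_nat k::complex) powr s) summable_on {1..}"
proof -
  have "summable (\<lambda>k. real k powr (- Re s))"
    using assms by (simp add: summable_real_powr_iff)
  moreover have "norm (1 / (of_nat k::complex) powr s) = real k powr (- Re s)" for k
    by (simp add: norm_divide norm_cpow_nat powr_minus_divide)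
  ultimately have "summable (\<lambda>k. norm (1 / (of_nat k::complex) powr s))" by simp
  then have "(\<lambda>k. 1 / (of_nat k::complex) powr s) summable_on UNIV"
    by (rule norm_summable_imp_summable_on)
  then show ?thesis by (rule summable_on_subset) auto
qed

lemma sigma_summable:
  assumes "ereal (Re S) > sigma_abs f"
  shows "(\<lambda>n. f n / (of_nat n::complex) powr S) summable_on {1..}"
proof -
  from assms obtain z where z: "z \<in> {ereal x | x. summable (\<lambda>n. norm (f (Suc n)) / real (Suc n) powr x)}" "z < ereal (Re S)"
    unfolding sigma_abs_def by (auto simp: Inf_less_iff)
  then obtain x where x: "summable (\<lambda>n. norm (f (Suc n)) / real (Suc n) powr x)" "x < Re S"
    by auto
  have sx: "summable (\<lambda>n. norm (f n) / real n powr x)"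
    using x(1) summable_Suc_iff[of "\<lambda>n. norm (f n) / real n powr x"] by simp
  have le: "norm (norm (f n / (of_nat n::complex) powr S)) \<le> norm (f n) / real n powr x" for n
  proof (cases "n = 0")
    case True
    then show ?thesis by simp
  next
    case False
    then have "real n powr x \<le> real n powr Re S" using x(2) by (intro powr_mono) auto
    moreover have "real n powr x > 0" using False by simp
    ultimately have "norm (f n) / real n powr Re S \<le> norm (f n) / real n powr x"
      by (intro divide_left_mono) auto
    then show ?thesis by (simp add: norm_divide norm_cpow_nat)
  qed
  have "summable (\<lambda>n. norm (f n / (of_nat n::complex) powr S))"
    by (rule summable_comparison_test'[OF sx le])
  then have "(\<lambda>n. f n / (of_nat n::complex) powr S) summable_on UNIV"
    by (rule norm_summable_imp_summable_on)
  then show ?thesis by (rule summable_on_subset) auto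
qed

lemma inj_pow: "(\<gamma>::nat) \<ge> 1 \<Longrightarrow> inj_on (\<lambda>c::nat. c ^ \<gamma>) A"
  by (intro inj_onI) (simp add: power_eq_iff_eq_base)

lemma pow_L:
  assumes "\<gamma> \<ge> 1" "(\<lambda>n. f n / (of_nat n::complex) powr S) summable_on {1..}"
  shows "(\<lambda>c. f (c^\<gamma>) / (of_nat (c^\<gamma>)::complex) powr S) summable_on {1..}"
    and "infsum (\<lambda>c. f (c^\<gamma>) / (of_nat (c^\<gamma>)::complex) powr S) {1..} = L S (restr_pow \<gamma> f)"
proof -
  define U where "U = (\<lambda>c::nat. c ^ \<gamma>) ` {1..}"
  have inj: "inj_on (\<lambda>c::nat. c ^ \<gamma>) {1..}" using assms(1) by (rule inj_pow)
  have sub: "U \<subseteq> {1..}" unfolding U_def by auto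
  have "(\<lambda>n. f n / (of_nat n::complex) powr S) summable_on U"
    using assms(2) sub by (rule summable_on_subset)
  then show "(\<lambda>c. f (c^\<gamma>) / (of_nat (c^\<gamma>)::complex) powr S) summable_on {1..}"
    unfolding U_def summable_on_reindex[OF inj] o_def .
  have "L S (restr_pow \<gamma> f) = infsum (\<lambda>n. f n / (of_nat n::complex) powr S) U"
    unfolding L_def
  proof (rule infsum_cong_neutral)
    fix n assume "n \<in> {1..} - U"
    then have "a_pow \<gamma> n = 0" unfolding U_def a_pow_def by auto
    then show "restr_pow \<gamma> f n / of_nat n powr S = 0" by (simp add: restr_pow_def)
  next
    fix n assume "n \<in> U - {1..}" then show "f n / of_nat n powr S = 0" using sub by auto
  next
    fix n assume "n \<in> {1..} \<inter> U"
    then have "a_pow \<gamma> n = 1" unfolding U_def a_pow_def by auto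
    then show "restr_pow \<gamma> f n / of_nat n powr S = f n / of_nat n powr S" by (simp add: restr_pow_def)
  qed
  also have "\<dots> = infsum (\<lambda>c. f (c^\<gamma>) / (of_nat (c^\<gamma>)::complex) powr S) {1..}"
    unfolding U_def infsum_reindex[OF inj] o_def ..
  finally show "infsum (\<lambda>c. f (c^\<gamma>) / (of_nat (c^\<gamma>)::complex) powr S) {1..} = L S (restr_pow \<gamma> f)" ..
qed

lemma fq_mult: "b \<ge> 1 \<Longrightarrow> fq f (a * b) b = f a"
  unfolding fq_def by simp

lemma pow_quot:
  assumes "(\<gamma>::nat) \<ge> 1" "(a::nat) ^ \<gamma> dvd b ^ \<gamma>"
  shows "a dvd b" "b ^ \<gamma> div a ^ \<gamma> = (b div a) ^ \<gamma>"
proof -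
  show ad: "a dvd b" using assms pow_divides_pow_iff[of \<gamma> a b] by simp
  show "b ^ \<gamma> div a ^ \<gamma> = (b div a) ^ \<gamma>" using div_power[OF ad] by simp
qed

lemma prod_sum_type:
  assumes "finite I" "finite J"
  shows "(\<Prod>x\<in>Inl ` I \<union> Inr ` J. F x) = (\<Prod>j\<in>I. F (Inl j)) * (\<Prod>j\<in>J. F (Inr j))"
proof -
  have "(\<Prod>x\<in>Inl ` I \<union> Inr ` J. F x) = (\<Prod>x\<in>Inl ` I. F x) * (\<Prod>x\<in>Inr ` J. F x)"
    using assms by (intro prod.union_disjoint) auto
  also have "\<dots> = (\<Prod>j\<in>I. F (Inl j)) * (\<Prod>j\<in>J. F (Inr j))"
    by (simp add: prod.reindex)
  finally show ?thesis .
qed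

lemma prod_split_ends:
  fixes F :: "nat \<Rightarrow> 'a::comm_monoid_mult"
  assumes "(m::nat) \<ge> 1"
  shows "(\<Prod>j\<in>{1..m+1}. F j) = F 1 * (\<Prod>j\<in>{2..m}. F j) * F (m+1)"
proof -
  have a: "(\<Prod>j\<in>{1..m+1}. F j) = F 1 * (\<Prod>j\<in>{2..m+1}. F j)"
    by (metis Suc_1 le_add2 prod.atLeast_Suc_atMost)
  have b: "(\<Prod>j\<in>{2..m+1}. F j) = (\<Prod>j\<in>{2..m}. F j) * F (m+1)"
    using assms prod.nat_ivl_Suc'[of 2 m F] by simp
  show ?thesis unfolding a b by (simp only: mult.assoc)
qed

lemma prod_head1:
  shows "(\<Prod>j\<in>{1..(m::nat)+1}. F j) = F 1 * (\<Prod>j\<in>{2..m+1}. F j)"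
  by (metis Suc_1 le_add2 prod.atLeast_Suc_atMost)



theorem theorem3p5:
  fixes m :: nat and f :: "nat \<Rightarrow> nat \<Rightarrow> complex" and \<gamma> :: "nat \<Rightarrow> nat"
    and s :: "nat \<Rightarrow> complex"
  assumes "m \<ge> 1"
    and "\<forall>j\<in>{0..m}. \<gamma> j \<ge> 1"
    and "\<forall>j\<in>{1..m}. \<gamma> (j - 1) dvd \<gamma> j"
    and "\<forall>j\<in>{2..m+1}. Re (s j) > 1"
    and "\<forall>j\<in>{1..m+1}. ereal (Re (\<Sum>i=1..j. s i)) > sigma_abs (f j)"
  shows "L_multi (m + 1) s (\<lambda>n. a_pow (\<gamma> 0) (n 1) * ram_sum m \<gamma> f n)
           = (\<Prod>j\<in>{2..m+1}. zeta (s j))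
             * (\<Prod>j\<in>{1..m+1}. L (\<Sum>i=1..j. s i) (restr_pow (\<gamma> (j - 1)) (f j)))
         \<and> (\<gamma> 0 = 1 \<longrightarrow> L_multi (m + 1) s (ram_sum m \<gamma> f)
           = (\<Prod>j\<in>{2..m+1}. zeta (s j)) * L (s 1) (f 1)
             * (\<Prod>j\<in>{2..m+1}. L (\<Sum>i=1..j. s i) (restr_pow (\<gamma> (j - 1)) (f j))))"
proof -
  note m1 = assms(1)
  have gpos: "\<gamma> j \<ge> 1" if "j \<le> m" for j using assms(2) that by auto
  have gdvd': "\<gamma> i dvd \<gamma> (i + q)" if "i + q \<le> m" for i q
    using that
  proof (induction q)
    case 0 then show ?case by simp
  next
    case (Suc q)
    then have "\<gamma> i dvd \<gamma> (i + q)" by simp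
    moreover have "\<gamma> (i + q) dvd \<gamma> (i + Suc q)"
      using assms(3) Suc.prems by (auto dest: bspec[of _ _ "i + Suc q"])
    ultimately show ?case by (rule dvd_trans)
  qed
  have gdvd: "\<gamma> i dvd \<gamma> j" if "i \<le> j" "j \<le> m" for i j
    using gdvd'[of i "j - i"] that by simp

  define S where "S j = (\<Sum>i=1..j. s i)" for j
  define A :: "(nat + nat) set" where "A = Inl ` {1..m+1} \<union> Inr ` {2..m+1}"
  define B :: "nat + nat \<Rightarrow> nat set" where "B = (\<lambda>_. {1..})"
  define h :: "nat + nat \<Rightarrow> nat \<Rightarrow> complex" where
    "h x c = (case x of Inl j \<Rightarrow> f j (c ^ \<gamma> (j-1)) / of_nat (c ^ \<gamma> (j-1)) powr S j
                        | Inr j \<Rightarrow> 1 / of_nat c powr s j)" for x c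
  define t where "t p j = p (Inl j) ^ \<gamma> (j-1)" for p :: "nat + nat \<Rightarrow> nat" and j
  define D where "D p j = (\<Prod>i\<in>{j+1..m+1}. t p i)" for p j
  define R where "R p j = (\<Prod>i\<in>{j+1..m+1}. p (Inl i) ^ (\<gamma> (i-1) div \<gamma> j))" for p :: "nat + nat \<Rightarrow> nat" and j
  define gn where "gn p j = (if j = 1 then D p 0 else if j \<in> {2..m+1} then D p (j-1) * p (Inr j) else 0)" for p j
  define gd where "gd p j = (if j \<in> {1..m} then R p j else 0)" for p j
  define g where "g p = (gn p, gd p)" for p
  define Dset where "Dset n = {d. (\<forall>j\<in>{1..m}. d j \<ge> 1 \<and> d j ^ \<gamma> j dvd Gcd (n ` {1..j+1}))
              \<and> (\<forall>j. j \<notin> {1..m} \<longrightarrow> d j = 0)}" for n :: "nat \<Rightarrow> nat"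
  define Tm where "Tm (n :: nat \<Rightarrow> nat) (d :: nat \<Rightarrow> nat) = fq (f 1) (n 1) (d 1 ^ \<gamma> 1)
        * (\<Prod>j\<in>{2..m}. fq (f j) (d (j - 1) ^ \<gamma> (j - 1)) (d j ^ \<gamma> j))
        * f (m + 1) (d m ^ \<gamma> m)" for n d
  define P where "P n = (\<Prod>i\<in>{1..m+1}. (of_nat (n i)::complex) powr s i)" for n :: "nat \<Rightarrow> nat"
  define T where "T z = (case z of (n :: nat \<Rightarrow> nat, d :: nat \<Rightarrow> nat) \<Rightarrow> a_pow (\<gamma> 0) (n 1) * Tm n d / P n)" for z
  define PI where "PI = PiE A B"

  have ram: "ram_sum m \<gamma> f n = sum (Tm n) (Dset n)" for n
    unfolding ram_sum_def Tm_def Dset_def ..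

  have finA: "finite A" unfolding A_def by simp

  have hsum: "h x summable_on B x" and hinf: "infsum (h x) (B x) = (case x of Inl j \<Rightarrow> L (S j) (restr_pow (\<gamma> (j - 1)) (f j)) | Inr j \<Rightarrow> zeta (s j))"
    if xA: "x \<in> A" for x
  proof -
    consider (l) j where "x = Inl j" "j \<in> {1..m+1}" | (r) j where "x = Inr j" "j \<in> {2..m+1}"
      using xA unfolding A_def by auto
    then have "h x summable_on B x \<and> infsum (h x) (B x) = (case x of Inl j \<Rightarrow> L (S j) (restr_pow (\<gamma> (j - 1)) (f j)) | Inr j \<Rightarrow> zeta (s j))"
    proof cases
      case l
      have g1: "\<gamma> (j-1) \<ge> 1" using l gpos by auto
      have ss: "(\<lambda>n. f j n / (of_nat n::complex) powr S j) summable_on {1..}"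
        using sigma_summable[of "f j" "S j"] assms(5) l unfolding S_def by auto
      have hx: "h x = (\<lambda>c. f j (c ^ \<gamma> (j-1)) / of_nat (c ^ \<gamma> (j-1)) powr S j)"
        using l unfolding h_def by auto
      show ?thesis unfolding hx B_def using pow_L[OF g1 ss] l by simp
    next
      case r
      have hx: "h x = (\<lambda>c. 1 / of_nat c powr s j)"
        using r unfolding h_def by auto
      show ?thesis unfolding hx B_def using zeta_summable[of "s j"] assms(4) r by (simp add: zeta_def)
    qed
    then show "h x summable_on B x" "infsum (h x) (B x) = (case x of Inl j \<Rightarrow> L (S j) (restr_pow (\<gamma> (j - 1)) (f j)) | Inr j \<Rightarrow> zeta (s j))"
      by auto
  qed

  have RHS: "(\<Prod>x\<in>A. infsum (h x) (B x)) = (\<Prod>j\<in>{2..m+1}. zeta (s j))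
             * (\<Prod>j\<in>{1..m+1}. L (\<Sum>i=1..j. s i) (restr_pow (\<gamma> (j - 1)) (f j)))"
  proof -
    have "(\<Prod>x\<in>A. infsum (h x) (B x)) = (\<Prod>x\<in>A. (case x of Inl j \<Rightarrow> L (S j) (restr_pow (\<gamma> (j - 1)) (f j)) | Inr j \<Rightarrow> zeta (s j)))"
      using hinf by (intro prod.cong) auto
    also have "\<dots> = (\<Prod>j\<in>{1..m+1}. L (S j) (restr_pow (\<gamma> (j - 1)) (f j))) * (\<Prod>j\<in>{2..m+1}. zeta (s j))"
      unfolding A_def by (subst prod_sum_type) auto
    finally show ?thesis unfolding S_def by (simp add: mult.commute)
  qed

  have hs: "((\<lambda>p. \<Prod>x\<in>A. h x (p x)) has_sum (\<Prod>x\<in>A. infsum (h x) (B x))) PI"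
  proof -
    have abs: "(\<lambda>y. norm (h x y)) summable_on B x" if "x \<in> A" for x
      using hsum[OF that] summable_on_iff_abs_summable_on_complex by blast
    have "(\<lambda>p. norm (\<Prod>x\<in>A. h x (p x))) summable_on PI"
      unfolding PI_def by (rule abs_summable_prod_PiE[OF finA abs])
    then have "(\<lambda>p. \<Prod>x\<in>A. h x (p x)) summable_on PI"
      using summable_on_iff_abs_summable_on_complex by blast
    moreover have "infsum (\<lambda>p. \<Prod>x\<in>A. h x (p x)) PI = (\<Prod>x\<in>A. infsum (h x) (B x))"
      unfolding PI_def by (rule infsum_prod_PiE_abs[OF finA abs])
    ultimately show ?thesis using has_sum_infsum by fastforce
  qed

  have pl: "p (Inl j) \<ge> 1" if "p \<in> PI" "j \<in> {1..m+1}" for p j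
    using that unfolding PI_def A_def B_def by (auto dest: PiE_mem[of p _ _ "Inl j"])
  have pr: "p (Inr j) \<ge> 1" if "p \<in> PI" "j \<in> {2..m+1}" for p j
    using that unfolding PI_def A_def B_def by (auto dest: PiE_mem[of p _ _ "Inr j"])
  have tpos: "t p j \<ge> 1" if "p \<in> PI" "j \<in> {1..m+1}" for p j
    using pl[OF that] unfolding t_def by simp
  have Dpos: "D p j \<ge> 1" if pPI: "p \<in> PI" for p j
  proof -
    have "0 < D p j" unfolding D_def
    proof (rule prod_pos)
      fix a assume "a \<in> {j+1..m+1}"
      then have "a \<in> {1..m+1}" by auto
      then show "0 < t p a" using tpos[OF pPI] by fastforce
    qed
    then show ?thesis by simp
  qed
  have Dstep: "D p (j-1) = t p j * D p j" if "j \<in> {1..m+1}" for p j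
  proof -
    have "D p (j-1) = (\<Prod>i\<in>{j..m+1}. t p i)" unfolding D_def using that by simp
    also have "\<dots> = t p j * (\<Prod>i\<in>{Suc j..m+1}. t p i)"
      using that by (intro prod.atLeast_Suc_atMost) auto
    finally show ?thesis unfolding D_def by simp
  qed
  have Dm: "D p m = t p (m+1)" for p unfolding D_def by simp
  have Ddvd: "D p b dvd D p a" if "a \<le> b" for p a b
    unfolding D_def using that by (intro prod_dvd_prod_subset) auto
  have RD: "R p j ^ \<gamma> j = D p j" if "j \<le> m" for p j
  proof -
    have "R p j ^ \<gamma> j = (\<Prod>i\<in>{j+1..m+1}. p (Inl i) ^ ((\<gamma> (i-1) div \<gamma> j) * \<gamma> j))"
      unfolding R_def prod_power_distrib by (simp add: power_mult)
    also have "\<dots> = (\<Prod>i\<in>{j+1..m+1}. t p i)"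
    proof (rule prod.cong[OF refl])
      fix i assume "i \<in> {j+1..m+1}"
      then have "\<gamma> j dvd \<gamma> (i-1)" using gdvd[of j "i-1"] by auto
      then show "p (Inl i) ^ ((\<gamma> (i-1) div \<gamma> j) * \<gamma> j) = t p i"
        unfolding t_def by simp
    qed
    finally show ?thesis unfolding D_def .
  qed
  have Rpos: "R p j \<ge> 1" if pPI: "p \<in> PI" for p j
  proof -
    have "0 < R p j" unfolding R_def
    proof (rule prod_pos)
      fix a assume "a \<in> {j+1..m+1}"
      then have "a \<in> {1..m+1}" by auto
      then show "0 < p (Inl a) ^ (\<gamma> (a - 1) div \<gamma> j)" using pl[OF pPI] by fastforce
    qed
    then show ?thesis by simp
  qed
  have gdD: "gd p j ^ \<gamma> j = D p j" if "j \<in> {1..m}" for p j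
    using that RD[of j p] unfolding gd_def by simp

  have gin: "g p \<in> Sigma (tuples (m+1)) Dset" if pPI: "p \<in> PI" for p
  proof -
    have gnt: "gn p \<in> tuples (m+1)"
      unfolding tuples_def gn_def using Dpos[OF pPI] pr[OF pPI] by (auto simp: less_eq_Suc_le)
    have "gd p \<in> Dset (gn p)"
      unfolding Dset_def
    proof (intro CollectI conjI ballI allI impI)
      fix j assume j: "j \<in> {1..m}"
      show "gd p j \<ge> 1" using j Rpos[OF pPI] unfolding gd_def by simp
      show "gd p j ^ \<gamma> j dvd Gcd (gn p ` {1..j+1})"
      proof (rule Gcd_greatest)
        fix b assume "b \<in> gn p ` {1..j+1}"
        then obtain i where i: "i \<in> {1..j+1}" "b = gn p i" by auto
        show "gd p j ^ \<gamma> j dvd b"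
        proof (cases "i = 1")
          case True
          then show ?thesis using i gdD[OF j] Ddvd[of 0 j p] by (simp add: gn_def)
        next
          case False
          then have "i \<in> {2..m+1}" using i j by auto
          then have "b = D p (i-1) * p (Inr i)" using i False by (simp add: gn_def)
          moreover have "D p j dvd D p (i-1)" using i by (intro Ddvd) auto
          ultimately show ?thesis using gdD[OF j] by simp
        qed
      qed
    next
      fix j assume "j \<notin> {1..m}" then show "gd p j = 0" unfolding gd_def by meson
    qed
    then show ?thesis using gnt unfolding g_def by simp
  qed

  have inj: "inj_on g PI"
  proof (rule inj_onI)
    fix p q assume pPI: "p \<in> PI" and qPI: "q \<in> PI" and eq: "g p = g q"
    then have gneq: "gn p = gn q" and gdeq: "gd p = gd q" unfolding g_def by auto
    have DD: "D p j = D q j" if jle: "j \<le> m + 1" for j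
    proof -
      consider "j = 0" | "j \<in> {1..m}" | "j = m + 1" using jle by fastforce
      then show ?thesis
      proof cases
        case 1 then show ?thesis using fun_cong[OF gneq, of 1] by (simp add: gn_def)
      next
        case 2 then show ?thesis using fun_cong[OF gdeq, of j] gdD[OF 2, of p] gdD[OF 2, of q] by metis
      next
        case 3 then show ?thesis unfolding D_def by simp
      qed
    qed
    have tt: "t p j = t q j" if j: "j \<in> {1..m+1}" for j
    proof -
      have "t p j * D p j = t q j * D q j" using Dstep[OF j, of p] Dstep[OF j, of q] DD[of "j-1"] j by fastforce
      moreover have "D p j = D q j" using DD[of j] j by auto
      moreover have "D p j \<ge> 1" using Dpos[OF pPI] by auto
      ultimately show ?thesis by simp
    qed
    show "p = q"
    proof (rule PiE_ext[OF pPI[unfolded PI_def] qPI[unfolded PI_def]])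
      fix x assume "x \<in> A"
      then consider (l) j where "x = Inl j" "j \<in> {1..m+1}" | (r) j where "x = Inr j" "j \<in> {2..m+1}"
        unfolding A_def by auto
      then show "p x = q x"
      proof cases
        case l
        have "p (Inl j) ^ \<gamma> (j-1) = q (Inl j) ^ \<gamma> (j-1)" using tt[OF l(2)] unfolding t_def .
        moreover have "\<gamma> (j-1) > 0" using gpos[of "j-1"] l by fastforce
        ultimately show ?thesis using l by (simp add: power_eq_iff_eq_base)
      next
        case r
        have "D p (j-1) * p (Inr j) = D q (j-1) * q (Inr j)"
          using fun_cong[OF gneq, of j] r by (simp add: gn_def)
        moreover have "D p (j-1) = D q (j-1)" using DD[of "j-1"] r by auto
        moreover have "D p (j-1) \<ge> 1" using Dpos[OF pPI] by auto
        ultimately show ?thesis using r by simp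
      qed
    qed
  qed

  have val: "T (g p) = (\<Prod>x\<in>A. h x (p x))" if pPI: "p \<in> PI" for p
  proof -
    have gn1: "gn p 1 = D p 0" unfolding gn_def by simp
    have a1: "a_pow (\<gamma> 0) (gn p 1) = 1"
    proof -
      have "gn p 1 = R p 0 ^ \<gamma> 0" using gn1 RD[of 0 p] by simp
      then show ?thesis using Rpos[OF pPI, of 0] unfolding a_pow_def by auto
    qed
    have e1: "fq (f 1) (gn p 1) (gd p 1 ^ \<gamma> 1) = f 1 (t p 1)"
    proof -
      have "gn p 1 = t p 1 * D p 1" using gn1 Dstep[of 1 p] by simp
      moreover have "gd p 1 ^ \<gamma> 1 = D p 1" using gdD[of 1 p] m1 by simp
      ultimately show ?thesis using fq_mult[OF Dpos[OF pPI, of 1]] by simp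
    qed
    have e2: "(\<Prod>j\<in>{2..m}. fq (f j) (gd p (j-1) ^ \<gamma> (j-1)) (gd p j ^ \<gamma> j)) = (\<Prod>j\<in>{2..m}. f j (t p j))"
    proof (rule prod.cong[OF refl])
      fix j assume j: "j \<in> {2..m}"
      have "j - 1 \<in> {1..m}" "j \<in> {1..m+1}" using j by auto
      then have "gd p (j-1) ^ \<gamma> (j-1) = t p j * D p j"
        using gdD[of "j-1" p] Dstep[of j p] by auto
      moreover have "gd p j ^ \<gamma> j = D p j" using gdD[of j p] j by auto
      ultimately show "fq (f j) (gd p (j-1) ^ \<gamma> (j-1)) (gd p j ^ \<gamma> j) = f j (t p j)"
        using fq_mult[OF Dpos[OF pPI, of j]] by simp
    qed
    have e3: "f (m+1) (gd p m ^ \<gamma> m) = f (m+1) (t p (m+1))"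
      using gdD[of m p] m1 Dm[of p] by simp
    have Tmv: "Tm (gn p) (gd p) = (\<Prod>j\<in>{1..m+1}. f j (t p j))"
      unfolding Tm_def e2 prod_split_ends[OF m1, of "\<lambda>j. f j (t p j)"]
      using e1 e3 by simp
    define t' where "t' i = (if i \<in> {1..m+1} then t p i else 1)" for i
    have t'1: "t' i \<ge> 1" for i unfolding t'_def using tpos[OF pPI] by auto
    have Dt': "D p (j-1) = (\<Prod>i=j..m+1. t' i)" if "j \<in> {1..m+1}" for j
      unfolding D_def t'_def using that by (intro prod.cong) auto
    have Pv: "P (gn p) = (\<Prod>j\<in>{1..m+1}. of_nat (t p j) powr S j) * (\<Prod>j\<in>{2..m+1}. of_nat (p (Inr j)) powr s j)"
    proof -
      have "P (gn p) = of_nat (D p 0) powr s 1 * (\<Prod>j\<in>{2..m+1}. (of_nat (gn p j)::complex) powr s j)"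
        unfolding P_def prod_head1 gn1 ..
      also have "(\<Prod>j\<in>{2..m+1}. (of_nat (gn p j)::complex) powr s j)
          = (\<Prod>j\<in>{2..m+1}. (of_nat (D p (j-1))::complex) powr s j * of_nat (p (Inr j)) powr s j)"
      proof (rule prod.cong[OF refl])
        fix j assume "j \<in> {2..m+1}"
        then have "gn p j = D p (j-1) * p (Inr j)" unfolding gn_def by auto
        then show "(of_nat (gn p j)::complex) powr s j = (of_nat (D p (j-1))::complex) powr s j * of_nat (p (Inr j)) powr s j"
          by (simp only: cpow_nat_mult)
      qed
      also have "\<dots> = (\<Prod>j\<in>{2..m+1}. (of_nat (D p (j-1))::complex) powr s j) * (\<Prod>j\<in>{2..m+1}. of_nat (p (Inr j)) powr s j)"
        by (rule prod.distrib)
      finally have "P (gn p) = (\<Prod>j\<in>{1..m+1}. (of_nat (D p (j-1))::complex) powr s j) * (\<Prod>j\<in>{2..m+1}. of_nat (p (Inr j)) powr s j)"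
        unfolding prod_head1[where F="\<lambda>j. (of_nat (D p (j-1))::complex) powr s j"] by (simp add: mult.assoc)
      also have "(\<Prod>j\<in>{1..m+1}. (of_nat (D p (j-1))::complex) powr s j) = (\<Prod>j\<in>{1..m+1}. (of_nat (\<Prod>i=j..m+1. t' i)::complex) powr s j)"
        using Dt' by (intro prod.cong) auto
      also have "\<dots> = (\<Prod>i=1..m+1. of_nat (t' i) powr (\<Sum>l=1..i. s l))"
        by (rule telescope_cpow[OF t'1])
      also have "\<dots> = (\<Prod>j\<in>{1..m+1}. of_nat (t p j) powr S j)"
        unfolding t'_def S_def by (intro prod.cong) auto
      finally show ?thesis .
    qed
    have hv: "(\<Prod>x\<in>A. h x (p x)) = (\<Prod>j\<in>{1..m+1}. f j (t p j) / of_nat (t p j) powr S j) * (\<Prod>j\<in>{2..m+1}. 1 / of_nat (p (Inr j)) powr s j)"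
      unfolding A_def by (subst prod_sum_type) (auto simp: h_def t_def)
    show ?thesis
      unfolding hv g_def T_def using a1 Tmv Pv by (simp add: prod_dividef)
  qed

  have zero: "T z = 0" if zin: "z \<in> Sigma (tuples (m+1)) Dset" and znot: "z \<notin> g ` PI" for z
  proof (rule ccontr)
    assume Tnz: "T z \<noteq> 0"
    obtain n d where z: "z = (n, d)" by (cases z)
    have nt: "n \<in> tuples (m+1)" and dD: "d \<in> Dset n" using zin z by auto
    have n_pos: "n i \<ge> 1" if "i \<in> {1..m+1}" for i using nt that unfolding tuples_def by auto
    have n_out: "n i = 0" if "i \<notin> {1..m+1}" for i using nt that unfolding tuples_def by auto
    have d_pos: "d j \<ge> 1" if "j \<in> {1..m}" for j using dD that unfolding Dset_def by auto
    have d_dvd: "d j ^ \<gamma> j dvd Gcd (n ` {1..j+1})" if "j \<in> {1..m}" for j using dD that unfolding Dset_def by auto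
    have d_out: "d j = 0" if "j \<notin> {1..m}" for j using dD that unfolding Dset_def by auto
    have anz: "a_pow (\<gamma> 0) (n 1) \<noteq> 0" and Tmnz: "Tm n d \<noteq> 0" using Tnz z unfolding T_def by auto
    from anz obtain y where y: "y \<ge> 1" "n 1 = y ^ \<gamma> 0" unfolding a_pow_def by (auto split: if_splits)
    have fqnz: "fq (f j) (d (j-1) ^ \<gamma> (j-1)) (d j ^ \<gamma> j) \<noteq> 0" if "j \<in> {2..m}" for j
      using Tmnz that unfolding Tm_def by auto
    define w where "w j = (if j = 0 then y else d j)" for j
    define E where "E j = w j ^ \<gamma> j" for j
    have E0: "E 0 = n 1" using y by (simp add: E_def w_def)
    have Ed: "E j = d j ^ \<gamma> j" if "j \<in> {1..m}" for j using that by (simp add: E_def w_def)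
    have wpos: "w j \<ge> 1" if "j \<le> m" for j using that y d_pos by (auto simp: w_def)
    have Edvd: "E j dvd E (j-1)" if j: "j \<in> {1..m}" for j
    proof (cases "j = 1")
      case True
      have "d 1 ^ \<gamma> 1 dvd Gcd (n ` {1..1+1})" using d_dvd[of 1] m1 by simp
      also have "Gcd (n ` {1..1+1}) dvd n 1" by (rule Gcd_dvd) auto
      finally show ?thesis using True E0 Ed[of 1] m1 by simp
    next
      case False
      then have "j \<in> {2..m}" using j by auto
      then have "d j ^ \<gamma> j dvd d (j-1) ^ \<gamma> (j-1)" using fqnz[of j] unfolding fq_def by (auto split: if_splits)
      moreover have "j - 1 \<in> {1..m}" using j False by auto
      ultimately show ?thesis using Ed[of j] Ed[of "j-1"] j by auto
    qed
    have Endvd: "E (j-1) dvd n j" if j: "j \<in> {2..m+1}" for j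
    proof -
      have j1: "j - 1 \<in> {1..m}" using j by auto
      have "d (j-1) ^ \<gamma> (j-1) dvd Gcd (n ` {1..j})" using d_dvd[OF j1] j by auto
      also have "Gcd (n ` {1..j}) dvd n j" by (rule Gcd_dvd) (use j in auto)
      finally show ?thesis using Ed[OF j1] by auto
    qed
    define r where "r j = \<gamma> j div \<gamma> (j-1)" for j
    have Epow: "E j = (w j ^ r j) ^ \<gamma> (j-1)" if j: "j \<in> {1..m}" for j
    proof -
      have "\<gamma> (j-1) dvd \<gamma> j" using gdvd[of "j-1" j] j by auto
      then show ?thesis unfolding E_def r_def by (simp add: power_mult[symmetric])
    qed
    have gj1: "\<gamma> (j-1) \<ge> 1" if "j \<in> {1..m+1}" for j using gpos[of "j-1"] that by auto
    have wdvd: "w j ^ r j dvd w (j-1)" and cpw: "E (j-1) div E j = (w (j-1) div w j ^ r j) ^ \<gamma> (j-1)"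
      if j: "j \<in> {1..m}" for j
    proof -
      have g1: "\<gamma> (j-1) \<ge> 1" using gj1[of j] j by auto
      have "(w j ^ r j) ^ \<gamma> (j-1) dvd w (j-1) ^ \<gamma> (j-1)"
        using Edvd[OF j] Epow[OF j] unfolding E_def by simp
      then show "w j ^ r j dvd w (j-1)" "E (j-1) div E j = (w (j-1) div w j ^ r j) ^ \<gamma> (j-1)"
        using pow_quot[OF g1] Epow[OF j] unfolding E_def by simp_all
    qed
    define c where "c j = (if j \<le> m then w (j-1) div w j ^ r j else d m)" for j
    have cpos: "c j \<ge> 1" if j: "j \<in> {1..m+1}" for j
    proof (cases "j \<le> m")
      case True
      then have jj: "j \<in> {1..m}" using j by auto
      have "w (j-1) \<ge> 1" using wpos[of "j-1"] True by auto
      then have "w (j-1) div w j ^ r j \<noteq> 0" using wdvd[OF jj]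
        by (metis dvd_div_eq_0_iff not_one_le_zero)
      then show ?thesis using True unfolding c_def by simp
    next
      case False then show ?thesis using d_pos[of m] m1 unfolding c_def by simp
    qed
    define k where "k j = n j div E (j-1)" for j
    have kpos: "k j \<ge> 1" if j: "j \<in> {2..m+1}" for j
    proof -
      have "n j \<ge> 1" using n_pos[of j] j by auto
      then have "n j div E (j-1) \<noteq> 0" using Endvd[OF j]
        by (metis dvd_div_eq_0_iff not_one_le_zero)
      then show ?thesis unfolding k_def by simp
    qed
    define p where "p x = (case x of Inl j \<Rightarrow> if j \<in> {1..m+1} then c j else undefined
                         | Inr j \<Rightarrow> if j \<in> {2..m+1} then k j else undefined)" for x
    have pPI: "p \<in> PI"
      unfolding PI_def PiE_def extensional_def A_def B_def
    proof (intro IntI CollectI allI impI Pi_I)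
      fix x assume "x \<in> Inl ` {1..m+1} \<union> Inr ` {2..m+1}"
      then show "p x \<in> {1..}" using cpos kpos unfolding p_def by auto
    next
      fix x assume "x \<notin> Inl ` {1..m+1} \<union> Inr ` {2..m+1}"
      then show "p x = undefined" unfolding p_def by (cases x) auto
    qed
    have tp: "t p j = (if j \<le> m then E (j-1) div E j else E m)" if j: "j \<in> {1..m+1}" for j
    proof (cases "j \<le> m")
      case True
      then show ?thesis using cpw[of j] j unfolding t_def p_def c_def by auto
    next
      case False
      then have "j = m + 1" using j by auto
      then show ?thesis using Ed[of m] m1 unfolding t_def p_def c_def by auto
    qed
    have DEq: "D p (m - q) = E (m - q)" if "q \<le> m" for q
      using that
    proof (induction q)
      case 0
      then show ?case using Dm[of p] tp[of "m+1"] by simp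
    next
      case (Suc q)
      define j where "j = m - Suc q"
      have j1: "j + 1 = m - q" "j + 1 \<in> {1..m}" using Suc.prems unfolding j_def by auto
      have "D p j = t p (j+1) * D p (j+1)" using Dstep[of "j+1" p] j1 by auto
      also have "\<dots> = (E j div E (j+1)) * E (j+1)"
      proof -
        have "j + 1 \<in> {1..m+1}" "j + 1 \<le> m" using j1(2) by auto
        then have "t p (j+1) = E (j + 1 - 1) div E (j+1)" using tp[of "j+1"] by presburger
        then have "t p (j+1) = E j div E (j+1)" by simp
        moreover have "D p (j+1) = E (j+1)" using j1 Suc.IH Suc.prems by auto
        ultimately show ?thesis by simp
      qed
      also have "\<dots> = E j" using Edvd[OF j1(2)] by simp
      finally show ?case unfolding j_def .
    qed
    have DE: "D p j = E j" if "j \<le> m" for j using DEq[of "m - j"] that by simp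
    have gnp: "gn p = n"
    proof
      fix i
      show "gn p i = n i"
      proof (cases "i = 1")
        case True then show ?thesis using DE[of 0] E0 unfolding gn_def by simp
      next
        case False
        show ?thesis
        proof (cases "i \<in> {2..m+1}")
          case True
          have pk: "p (Inr i) = k i" using True unfolding p_def by simp
          have "i - 1 \<le> m" using True by auto
          then have "gn p i = E (i-1) * (n i div E (i-1))"
            using DE[of "i-1"] False True pk unfolding gn_def k_def by auto
          then show ?thesis using Endvd[OF True] by simp
        next
          case nn: False
          then have "i \<notin> {1..m+1}" using False by auto
          then show ?thesis using n_out[of i] False nn unfolding gn_def by auto
        qed
      qed
    qed
    have gdp: "gd p = d"
    proof
      fix j
      show "gd p j = d j"
      proof (cases "j \<in> {1..m}")
        case True
        have "R p j ^ \<gamma> j = d j ^ \<gamma> j" using RD[of j p] DE[of j] Ed[OF True] True by auto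
        moreover have "\<gamma> j > 0" using gpos[of j] True by auto
        ultimately show ?thesis using True unfolding gd_def by (simp add: power_eq_iff_eq_base)
      next
        case False then show ?thesis using d_out unfolding gd_def by auto
      qed
    qed
    have "z = g p" using z gnp gdp unfolding g_def by simp
    then show False using znot pPI by auto
  qed

  have finD: "finite (Dset n)" if nt: "n \<in> tuples (m+1)" for n
  proof -
    have n1: "n 1 \<ge> 1" using nt m1 unfolding tuples_def by auto
    have "Dset n \<subseteq> (\<lambda>q j. if j \<in> {1..m} then q j else 0) ` PiE {1..m} (\<lambda>_. {..n 1})"
    proof
      fix d assume dD: "d \<in> Dset n"
      have le: "d j \<le> n 1" if j: "j \<in> {1..m}" for j
      proof -
        have "d j ^ \<gamma> j dvd Gcd (n ` {1..j+1})" "d j \<ge> 1" using dD j unfolding Dset_def by auto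
        moreover have "Gcd (n ` {1..j+1}) dvd n 1" by (rule Gcd_dvd) auto
        ultimately have "d j ^ \<gamma> j dvd n 1" "d j \<ge> 1" by (auto intro: dvd_trans)
        then have "d j ^ \<gamma> j \<le> n 1" using n1 by (intro dvd_imp_le) auto
        moreover have "d j \<le> d j ^ \<gamma> j" using \<open>d j \<ge> 1\<close> gpos[of j] j by (intro self_le_power) auto
        ultimately show ?thesis by simp
      qed
      have "d = (\<lambda>j. if j \<in> {1..m} then restrict d {1..m} j else 0)"
        using dD unfolding Dset_def by (auto simp: fun_eq_iff)
      moreover have "restrict d {1..m} \<in> PiE {1..m} (\<lambda>_. {..n 1})" using le by auto
      ultimately show "d \<in> (\<lambda>q j. if j \<in> {1..m} then q j else 0) ` PiE {1..m} (\<lambda>_. {..n 1})"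
        by (intro image_eqI) auto
    qed
    moreover have "finite (PiE {1..m} (\<lambda>_. {..n 1}))" by (intro finite_PiE) auto
    ultimately show ?thesis by (meson finite_imageI finite_subset)
  qed

  define RHS where "RHS = (\<Prod>x\<in>A. infsum (h x) (B x))"
  have hs2: "(T has_sum RHS) (g ` PI)"
  proof -
    have "((T \<circ> g) has_sum RHS) PI"
      using hs unfolding RHS_def by (rule has_sum_cong_neutral[THEN iffD1, rotated -1]) (auto simp: val)
    then show ?thesis using has_sum_reindex[OF inj] by blast
  qed
  have hs3: "(T has_sum RHS) (Sigma (tuples (m+1)) Dset)"
  proof -
    have "(T has_sum RHS) (g ` PI) \<longleftrightarrow> (T has_sum RHS) (Sigma (tuples (m+1)) Dset)"
    proof (rule has_sum_cong_neutral)
      fix x assume "x \<in> Sigma (tuples (m+1)) Dset - g ` PI" then show "T x = 0" using zero by blast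
    next
      fix x assume "x \<in> g ` PI - Sigma (tuples (m+1)) Dset" then show "T x = 0" using gin by blast
    qed simp
    then show ?thesis using hs2 by blast
  qed
  have inner: "((\<lambda>d. T (n, d)) has_sum (a_pow (\<gamma> 0) (n 1) * ram_sum m \<gamma> f n / P n)) (Dset n)"
    if "n \<in> tuples (m+1)" for n
  proof (rule has_sum_finiteI[OF finD[OF that]])
    show "a_pow (\<gamma> 0) (n 1) * ram_sum m \<gamma> f n / P n = sum (\<lambda>d. T (n, d)) (Dset n)"
      unfolding ram T_def by (simp add: sum_distrib_left sum_divide_distrib)
  qed
  have hs4: "((\<lambda>n. a_pow (\<gamma> 0) (n 1) * ram_sum m \<gamma> f n / P n) has_sum RHS) (tuples (m+1))"
    by (rule has_sum_SigmaD[OF hs3 inner])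
  have main: "L_multi (m + 1) s (\<lambda>n. a_pow (\<gamma> 0) (n 1) * ram_sum m \<gamma> f n) = RHS"
    unfolding L_multi_def using hs4 unfolding P_def by (rule infsumI)
  have first: "L_multi (m + 1) s (\<lambda>n. a_pow (\<gamma> 0) (n 1) * ram_sum m \<gamma> f n)
           = (\<Prod>j\<in>{2..m+1}. zeta (s j))
             * (\<Prod>j\<in>{1..m+1}. L (\<Sum>i=1..j. s i) (restr_pow (\<gamma> (j - 1)) (f j)))"
    using main RHS unfolding RHS_def by simp
  show ?thesis
  proof (intro conjI impI first)
    assume g0: "\<gamma> 0 = 1"
    have "L_multi (m + 1) s (ram_sum m \<gamma> f) = L_multi (m + 1) s (\<lambda>n. a_pow (\<gamma> 0) (n 1) * ram_sum m \<gamma> f n)"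
      unfolding L_multi_def
    proof (rule infsum_cong)
      fix n assume "n \<in> tuples (m+1)"
      then have "n 1 \<ge> 1" unfolding tuples_def by auto
      then have "a_pow (\<gamma> 0) (n 1) = 1" using g0 unfolding a_pow_def by auto
      then show "ram_sum m \<gamma> f n / (\<Prod>i\<in>{1..m+1}. of_nat (n i) powr s i) =
          a_pow (\<gamma> 0) (n 1) * ram_sum m \<gamma> f n / (\<Prod>i\<in>{1..m+1}. of_nat (n i) powr s i)" by simp
    qed
    also have "\<dots> = (\<Prod>j\<in>{2..m+1}. zeta (s j))
             * (\<Prod>j\<in>{1..m+1}. L (\<Sum>i=1..j. s i) (restr_pow (\<gamma> (j - 1)) (f j)))" by (rule first)
    also have "(\<Prod>j\<in>{1..m+1}. L (\<Sum>i=1..j. s i) (restr_pow (\<gamma> (j - 1)) (f j)))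
        = L (s 1) (f 1) * (\<Prod>j\<in>{2..m+1}. L (\<Sum>i=1..j. s i) (restr_pow (\<gamma> (j - 1)) (f j)))"
    proof -
      have "L (\<Sum>i=1..1. s i) (restr_pow (\<gamma> (1 - 1)) (f 1)) = L (s 1) (f 1)"
        unfolding L_def
      proof (simp, rule infsum_cong)
        fix n :: nat assume "n \<in> {Suc 0..}"
        then have "a_pow (\<gamma> 0) n = 1" using g0 unfolding a_pow_def by auto
        then show "restr_pow (\<gamma> 0) (f (Suc 0)) n / of_nat n powr s (Suc 0) = f (Suc 0) n / of_nat n powr s (Suc 0)"
          unfolding restr_pow_def by simp
      qed
      then show ?thesis by (simp only: prod_head1)
    qed
    finally show "L_multi (m + 1) s (ram_sum m \<gamma> f)
           = (\<Prod>j\<in>{2..m+1}. zeta (s j)) * L (s 1) (f 1)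
             * (\<Prod>j\<in>{2..m+1}. L (\<Sum>i=1..j. s i) (restr_pow (\<gamma> (j - 1)) (f j)))"
      by (simp add: mult.assoc)
  qed
qed
end
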